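(* Let $n$ be a positive integer, $p$ a non-negative integer and $m$ an integer. With $\delta_m$, $\widehat{\cdot}$, $\overline{\cdot}$, $A_n,B_n,C_n$ and $K''_\pm=-\frac{m\pi^2(m\pm1)}{4}$ as in the context, for $-\pi<\arg\zeta<\pi$, $$\begin{aligned}S_{-n-2p-1,-n}(\zeta\mathrm{e}^{-m\pi i})&=(-1)^{mn}S_{-n-2p-1,-n}(\zeta)+\frac{(-1)^{(m+1)n+p}}{2^{2p+n}n!\,p!\,(1+n)_p}\zeta^{-n}\Big\{-\delta_m\big[\widehat{A}_n(\zeta)+\widehat{B}_n(\zeta)S_{-1,0}(\zeta)+\zeta\widehat{C}_n(\zeta)S'_{-1,0}(\zeta)\big]\\&\quad+\overline{B}_n(\zeta)\big[K''_+H^{(1)}_0(\zeta)+K''_-H^{(2)}_0(\zeta)\big]-\zeta\overline{C}_n(\zeta)\big[K''_+H^{(1)}_1(\zeta)+K''_-H^{(2)}_1(\zeta)\big]\Big\}.\end{aligned}$$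
   Context: $\delta_m=1+(-1)^{m-1}$; for a polynomial $P$, $\widehat{P}$ is the sum of its odd-degree terms and $\overline{P}=P-\delta_m\widehat{P}$. $H^{(1)}_\nu=J_\nu+iY_\nu$, $H^{(2)}_\nu=J_\nu-iY_\nu$ ($J_\nu,Y_\nu$ Bessel functions), $\psi=\Gamma'/\Gamma$, $(a)_k=a(a+1)\cdots(a+k-1)$. $S_{-1,0}(\zeta)=\frac12\sum_{k\ge0}\frac{(-1)^k(\zeta/2)^{2k}}{(k!)^2}\big\{[\log\frac{\zeta}{2}-\psi(k+1)]^2-\frac12\psi'(k+1)+\frac{\pi^2}{4}\big\}$; $S_{-n-1,-n}(\zeta)=\frac{(-1)^n\zeta^n}{n!}\frac{d^n}{d(\zeta^2)^n}S_{-1,0}(\zeta)$; $S_{-n-2p-1,-n}(\zeta)=\sum_{j=0}^{p-1}\frac{(-1)^j\zeta^{-n-2p+2j}}{2^{2j+2}(-p)_{j+1}(-n-p)_{j+1}}+\frac{(-1)^pS_{-n-1,-n}(\zeta)}{2^{2p}p!(1+n)_p}$. Polynomials: $A_1=B_1=0$, $C_1=1$, and for $n\ge2$: $A_n=-2(n-1)A_{n-1}+\zeta A'_{n-1}+C_{n-1}$, $B_n=-2(n-1)B_{n-1}+\zeta B'_{n-1}-\zeta^2C_{n-1}$, $C_n=-2(n-1)C_{n-1}+B_{n-1}+\zeta C'_{n-1}$; then $S_{-n-1,-n}=\frac{(-1)^n\zeta^{-n}}{2^nn!}[A_n+B_nS_{-1,0}+\zeta C_nS'_{-1,0}]$. Right-hand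 side functions are on the principal branch $-\pi<\arg\zeta<\pi$; $g(\zeta\mathrm{e}^{-m\pi i})$ is the value of the analytic continuation of the principal branch at the point over $\zeta$ with argument $\arg\zeta-m\pi$. *)

theory Defs
  imports "HOL-Complex_Analysis.Complex_Analysis" "HOL-Computational_Algebra.Polynomial"
begin

text \<open>All functions of zeta below are principal-branch values (zeta in the slit plane,
  logarithm = principal Ln).\<close>

definition besselJ :: "nat \<Rightarrow> complex \<Rightarrow> complex" where
  "besselJ n z = (\<Sum>k. (-1) ^ k * (z / 2) ^ (2 * k + n) / (fact k * fact (k + n)))"

text \<open>Bessel function of the second kind of integer order n, principal branch (DLMF 10.8.1).\<close>
definition besselY :: "nat \<Rightarrow> complex \<Rightarrow> complex" where
  "besselY n z =
     - ((z / 2) powi (- int n)) / of_real pi * (\<Sum>k<n. fact (n - k - 1) / fact k * (z\<^sup>2 / 4) ^ k)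
     + 2 / of_real pi * Ln (z / 2) * besselJ n z
     - (z / 2) ^ n / of_real pi *
         (\<Sum>k. (Digamma (of_nat (k + 1)) + Digamma (of_nat (n + k + 1)))
                 * (- z\<^sup>2 / 4) ^ k / (fact k * fact (n + k)))"

definition hankel1 :: "nat \<Rightarrow> complex \<Rightarrow> complex" where
  "hankel1 n z = besselJ n z + \<i> * besselY n z"

definition hankel2 :: "nat \<Rightarrow> complex \<Rightarrow> complex" where
  "hankel2 n z = besselJ n z - \<i> * besselY n z"

definition S10 :: "complex \<Rightarrow> complex" where
  "S10 z = 1 / 2 * (\<Sum>k. (-1) ^ k * (z / 2) ^ (2 * k) / (fact k)\<^sup>2 *
       ((Ln (z / 2) - Digamma (of_nat (k + 1)))\<^sup>2 - Polygamma 1 (of_nat (k + 1)) / 2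
        + (of_real pi)\<^sup>2 / 4))"

text \<open>Derivative with respect to zeta^2: d/d(z^2) = (1/(2z)) d/dz.\<close>
definition dsq :: "(complex \<Rightarrow> complex) \<Rightarrow> complex \<Rightarrow> complex" where
  "dsq f z = deriv f z / (2 * z)"

definition Sn :: "nat \<Rightarrow> complex \<Rightarrow> complex" where
  "Sn n z = (-1) ^ n * z ^ n / fact n * (dsq ^^ n) S10 z"

definition Snp :: "nat \<Rightarrow> nat \<Rightarrow> complex \<Rightarrow> complex" where
  "Snp n p z =
     (\<Sum>j<p. (-1) ^ j * z powi (- int n - 2 * int p + 2 * int j)
        / (2 ^ (2 * j + 2) * pochhammer (- of_nat p) (j + 1) * pochhammer (- of_nat (n + p)) (j + 1)))
     + (-1) ^ p * Sn n z / (2 ^ (2 * p) * fact p * pochhammer (1 + of_nat n) p)"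

text \<open>The polynomials (A_n, B_n, C_n); index 0 is a dummy value.\<close>
fun ABC :: "nat \<Rightarrow> complex poly \<times> complex poly \<times> complex poly" where
  "ABC 0 = (0, 0, 0)"
| "ABC (Suc 0) = (0, 0, 1)"
| "ABC (Suc (Suc k)) =
     (let (a, b, c) = ABC (Suc k); t = of_nat (2 * (k + 1)) in
       (- smult t a + [:0, 1:] * pderiv a + c,
        - smult t b + [:0, 1:] * pderiv b - [:0, 0, 1:] * c,
        - smult t c + b + [:0, 1:] * pderiv c))"

definition polyA :: "nat \<Rightarrow> complex poly" where "polyA n = fst (ABC n)"
definition polyB :: "nat \<Rightarrow> complex poly" where "polyB n = fst (snd (ABC n))"
definition polyC :: "nat \<Rightarrow> complex poly" where "polyC n = snd (snd (ABC n))"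

definition odd_part :: "complex poly \<Rightarrow> complex poly" where
  "odd_part P = (\<Sum>i\<le>degree P. if odd i then monom (coeff P i) i else 0)"

definition delta :: "int \<Rightarrow> complex" where
  "delta m = 1 + (-1) powi (m - 1)"

definition bar_part :: "int \<Rightarrow> complex poly \<Rightarrow> complex poly" where
  "bar_part m P = P - smult (delta m) (odd_part P)"

definition Kpp_plus :: "int \<Rightarrow> complex" where
  "Kpp_plus m = - of_int m * (of_real pi)\<^sup>2 * (of_int m + 1) / 4"
definition Kpp_minus :: "int \<Rightarrow> complex" where
  "Kpp_minus m = - of_int m * (of_real pi)\<^sup>2 * (of_int m - 1) / 4"

end

theory Submission
  imports Defs
begin


definition ES :: "(nat \<Rightarrow> complex) \<Rightarrow> bool" where
  "ES b \<longleftrightarrow> (\<forall>t. summable (\<lambda>k. b k * t ^ k))"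
definition Ew :: "(nat \<Rightarrow> complex) \<Rightarrow> complex \<Rightarrow> complex" where
  "Ew b w = (\<Sum>k. b k * exp (2 * w) ^ k)"
definition nb :: "(nat \<Rightarrow> complex) \<Rightarrow> nat \<Rightarrow> complex" where
  "nb b = (\<lambda>k. 2 * of_nat k * b k)"
definition shb :: "(nat \<Rightarrow> complex) \<Rightarrow> nat \<Rightarrow> complex" where
  "shb b = (\<lambda>k. if k = 0 then 0 else b (k - 1))"

lemma ES_sums: "ES b \<Longrightarrow> (\<lambda>k. b k * t ^ k) sums (\<Sum>k. b k * t ^ k)"
  unfolding ES_def by (simp add: summable_sums)

lemma ES_nb_aux:
  assumes "ES b"
  shows "(\<lambda>k. nb b k * t ^ k) sums (2 * (t * (\<Sum>k. diffs b k * t ^ k)))"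
proof -
  have s: "summable (\<lambda>k. diffs b k * t ^ k)"
    by (rule termdiff_converges_all) (use assms in \<open>auto simp: ES_def\<close>)
  hence "(\<lambda>k. 2 * t * (diffs b k * t ^ k)) sums (2 * t * (\<Sum>k. diffs b k * t ^ k))"
    by (intro sums_mult summable_sums)
  moreover have "(\<lambda>k. 2 * t * (diffs b k * t ^ k)) = (\<lambda>k. nb b (Suc k) * t ^ Suc k)"
    by (auto simp: diffs_def nb_def algebra_simps)
  ultimately have "(\<lambda>k. nb b (Suc k) * t ^ Suc k) sums (2 * t * (\<Sum>k. diffs b k * t ^ k))"
    by simp
  hence "(\<lambda>k. nb b k * t ^ k) sums (2 * t * (\<Sum>k. diffs b k * t ^ k) + nb b 0 * t ^ 0)"
    by (subst (asm) sums_Suc_iff) 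
  thus ?thesis by (simp add: nb_def mult.assoc)
qed

lemma ES_nb: "ES b \<Longrightarrow> ES (nb b)"
  using ES_nb_aux unfolding ES_def by (blast intro: sums_summable)

lemma Ew_deriv:
  assumes "ES b"
  shows "(Ew b has_field_derivative Ew (nb b) w) (at w)"
proof -
  have d: "((\<lambda>x. \<Sum>n. b n * x^n) has_field_derivative (\<Sum>n. diffs b n * x^n)) (at x)" for x
    by (rule termdiffs_strong_converges_everywhere) (use assms in \<open>auto simp: ES_def\<close>)
  have e: "((\<lambda>w. exp (2 * w)) has_field_derivative (exp (2 * w) * 2)) (at w)"
    by (auto intro!: derivative_eq_intros)
  have "((\<lambda>w. (\<Sum>n. b n * (exp (2 * w))^n)) has_field_derivative
        ((\<Sum>n. diffs b n * (exp (2*w))^n) * (exp (2 * w) * 2))) (at w)"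
    using DERIV_chain2[OF d e] .
  moreover have "(\<Sum>n. diffs b n * (exp (2*w))^n) * (exp (2 * w) * 2) = Ew (nb b) w"
    using sums_unique[OF ES_nb_aux[OF assms, of "exp (2*w)"]] unfolding Ew_def
    by (simp add: algebra_simps)
  ultimately show ?thesis unfolding Ew_def[abs_def] by simp
qed

lemma Ew_shb:
  assumes "ES b"
  shows "exp (2 * w) * Ew b w = Ew (shb b) w" and "ES (shb b)"
proof -
  have aux: "(\<lambda>k. shb b k * t ^ k) sums (t * (\<Sum>k. b k * t ^ k))" for t
  proof -
    have "(\<lambda>k. t * (b k * t ^ k)) sums (t * (\<Sum>k. b k * t ^ k))"
      by (intro sums_mult ES_sums assms)
    moreover have "(\<lambda>k. t * (b k * t ^ k)) = (\<lambda>k. shb b (Suc k) * t ^ Suc k)"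
      by (auto simp: shb_def algebra_simps)
    ultimately have "(\<lambda>k. shb b (Suc k) * t ^ Suc k) sums (t * (\<Sum>k. b k * t ^ k))" by simp
    hence "(\<lambda>k. shb b k * t ^ k) sums (t * (\<Sum>k. b k * t ^ k) + shb b 0 * t ^ 0)"
      by (subst (asm) sums_Suc_iff)
    thus ?thesis by (simp add: shb_def)
  qed
  show "exp (2 * w) * Ew b w = Ew (shb b) w"
    using sums_unique[OF aux[of "exp (2*w)"]] unfolding Ew_def by simp
  show "ES (shb b)" using aux unfolding ES_def by (blast intro: sums_summable)
qed

lemma Ew_diff: "ES b \<Longrightarrow> ES b' \<Longrightarrow> Ew (\<lambda>k. b k - b' k) w = Ew b w - Ew b' w"
  unfolding Ew_def ES_def by (simp add: suminf_diff left_diff_distrib)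
lemma ES_diff: "ES b \<Longrightarrow> ES b' \<Longrightarrow> ES (\<lambda>k. b k - b' k)"
  unfolding ES_def by (auto simp: algebra_simps intro: summable_diff)
lemma Ew_add: "ES b \<Longrightarrow> ES b' \<Longrightarrow> Ew (\<lambda>k. b k + b' k) w = Ew b w + Ew b' w"
  unfolding Ew_def ES_def by (simp add: suminf_add distrib_right)
lemma ES_add: "ES b \<Longrightarrow> ES b' \<Longrightarrow> ES (\<lambda>k. b k + b' k)"
  unfolding ES_def by (auto simp: algebra_simps intro: summable_add)
lemma Ew_cmult: "ES b \<Longrightarrow> Ew (\<lambda>k. c * b k) w = c * Ew b w"
  unfolding Ew_def ES_def by (subst suminf_mult[symmetric]) (auto simp: algebra_simps)
lemma ES_cmult: "ES b \<Longrightarrow> ES (\<lambda>k. c * b k)"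
  unfolding ES_def by (auto simp: mult.assoc intro: summable_mult)

lemma Ew_periodic: "exp (2 * c) = 1 \<Longrightarrow> Ew b (w - c) = Ew b w"
  unfolding Ew_def by (simp add: right_diff_distrib exp_diff)

lemma Ew_holo: "ES b \<Longrightarrow> Ew b holomorphic_on UNIV"
  using Ew_deriv by (auto simp: holomorphic_on_def field_differentiable_def)

lemma ES_bound:
  assumes "\<And>k. norm (b k) \<le> C / fact k"
  shows "ES b"
  unfolding ES_def
proof
  fix t :: complex
  have "summable (\<lambda>k. C * (inverse (fact k) * norm t ^ k))"
    by (intro summable_mult summable_exp)
  moreover have "norm (b k * t ^ k) \<le> C * (inverse (fact k) * norm t ^ k)" for k
  proof -
    have "norm (b k * t ^ k) = norm (b k) * norm t ^ k" by (simp add: norm_mult norm_power)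
    also have "\<dots> \<le> C / fact k * norm t ^ k" by (intro mult_right_mono assms) auto
    finally show ?thesis by (simp add: field_simps)
  qed
  ultimately show "summable (\<lambda>k. b k * t ^ k)"
    by (rule summable_comparison_test'[where N=0])
qed




definition ca :: "nat \<Rightarrow> complex" where "ca k = (-1) ^ k / (4 ^ k * (fact k)\<^sup>2)"
definition psi :: "nat \<Rightarrow> complex" where "psi k = Digamma (of_nat (k + 1))"
definition cq :: "nat \<Rightarrow> complex" where "cq k = ca k * psi k"
definition cr :: "nat \<Rightarrow> complex" where
  "cr k = ca k * ((psi k)\<^sup>2 - Polygamma 1 (of_nat (k + 1)) / 2 + (of_real pi)\<^sup>2 / 4)"

lemma sq_le_4pow: "(real k + 1)^2 \<le> 2 * 4 ^ k"
proof (induction k)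
  case (Suc k)
  have "(real (Suc k) + 1)^2 \<le> 4 * (real k + 1)^2" by (simp add: power2_eq_square algebra_simps)
  also have "\<dots> \<le> 4 * (2 * 4 ^ k)" using Suc by simp
  finally show ?case by simp
qed simp

lemma norm_ca: "norm (ca k) = 1 / (4 ^ k * (fact k)\<^sup>2)"
  by (simp add: ca_def norm_divide norm_mult norm_power)

lemma ca_bound: "norm (ca k) * (real k + 1)^2 \<le> 2 / fact k"
proof -
  have f1: "(1::real) \<le> fact k" by simp
  have "norm (ca k) * (real k + 1)^2 = (real k + 1)^2 / (4^k * (fact k)^2)" by (simp add: norm_ca)
  also have "\<dots> \<le> (2 * 4 ^ k) / (4 ^ k * (fact k)\<^sup>2)"
    by (rule divide_right_mono[OF sq_le_4pow]) simp
  also have "\<dots> = 2 / (fact k)\<^sup>2" by simp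
  also have "\<dots> \<le> 2 / fact k"
    using f1 by (intro divide_left_mono) (auto simp: power2_eq_square)
  finally show ?thesis .
qed

lemma harm_le_n: "harm n \<le> (real n)"
proof -
  have "harm n = (\<Sum>k=1..n. inverse (real k))" by (simp add: harm_def)
  also have "\<dots> \<le> (\<Sum>k=1..n. 1)" by (intro sum_mono) (auto simp: inverse_le_1_iff)
  finally show ?thesis by simp
qed

lemma psi_bound: "norm (psi k) \<le> real k + 1"
proof -
  have "psi k = of_real (harm k - euler_mascheroni)"
    unfolding psi_def using Digamma_of_nat[of k, where 'a=complex]
    by (simp add: of_real_harm)
  hence "norm (psi k) = \<bar>harm k - euler_mascheroni\<bar>" by (metis norm_of_real)
  also have "\<dots> \<le> real k + 1"
    using harm_le_n[of k] harm_nonneg[of k, where 'a=real] euler_mascheroni_pos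
      euler_mascheroni_less_13_over_22 by linarith
  finally show ?thesis .
qed

lemma pg_bound: "norm (Polygamma 1 (of_nat (k + 1) :: complex)) \<le> norm (Polygamma 1 (1::complex)) + real k"
proof -
  have "Polygamma 1 (1 + of_nat k :: complex) =
         Polygamma 1 1 + (-1) ^ 1 * fact 1 * (\<Sum>j<k. 1 / (1 + of_nat j) ^ Suc 1)"
    by (rule Polygamma_plus_of_nat) (auto dest!: arg_cong[of _ _ Re])
  hence e: "Polygamma 1 (of_nat (k + 1) :: complex) = Polygamma 1 1 - (\<Sum>j<k. 1 / (1 + of_nat j) ^ 2)"
    by (simp add: add.commute power2_eq_square)
  have "norm (\<Sum>j<k. 1 / (1 + of_nat j :: complex) ^ 2) \<le> (\<Sum>j<k. 1)"
  proof (rule norm_sum[THEN order_trans], intro sum_mono)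
    fix j assume "j \<in> {..<k}"
    have "norm (1 + of_nat j :: complex) = 1 + real j"
      by (metis norm_of_nat of_nat_Suc add.commute)
    thus "norm (1 / (1 + of_nat j :: complex) ^ 2) \<le> 1"
      by (simp add: norm_divide norm_power)
  qed
  hence "norm (\<Sum>j<k. 1 / (1 + of_nat j :: complex) ^ 2) \<le> real k" by simp
  moreover have "norm (Polygamma 1 (of_nat (k + 1) :: complex)) \<le> norm (Polygamma 1 (1::complex)) + norm (\<Sum>j<k. 1 / (1 + of_nat j :: complex) ^ 2)"
    unfolding e by (rule norm_triangle_ineq4)
  ultimately show ?thesis by linarith
qed

lemma ES_ca: "ES ca"
proof (rule ES_bound[of _ 2])
  fix k
  have "norm (ca k) * 1 \<le> norm (ca k) * (real k + 1)^2"
    by (intro mult_left_mono) auto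
  thus "norm (ca k) \<le> 2 / fact k" using ca_bound[of k] by simp
qed

lemma ES_cq: "ES cq"
proof (rule ES_bound[of _ 2])
  fix k
  have "norm (cq k) = norm (ca k) * norm (psi k)" by (simp add: cq_def norm_mult)
  also have "\<dots> \<le> norm (ca k) * (real k + 1)^2"
  proof (intro mult_left_mono)
    have "real k + 1 \<le> (real k + 1)^2" by (simp add: power2_eq_square)
    thus "norm (psi k) \<le> (real k + 1)^2" using psi_bound[of k] by linarith
  qed simp
  also have "\<dots> \<le> 2 / fact k" by (rule ca_bound)
  finally show "norm (cq k) \<le> 2 / fact k" .
qed

lemma lin_aux: fixes P q k s :: real shows "P \<le> P * s \<Longrightarrow> q \<le> q * s \<Longrightarrow> k \<le> s \<Longrightarrow> 0 \<le> P \<Longrightarrow> 0 \<le> q \<Longrightarrow> 0 \<le> s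
   \<Longrightarrow> s + (P + k) / 2 + q / 4 \<le> s + (P * s + s) + q * s"
proof -
  assume a: "P \<le> P * s" "q \<le> q * s" "k \<le> s" "0 \<le> P" "0 \<le> q" "0 \<le> s"
  have "P/2 \<le> P * s" "k/2 \<le> s" "q/4 \<le> q * s" using a by linarith+
  hence "P/2 + k/2 + q/4 \<le> P * s + s + q * s" by linarith
  thus ?thesis by (simp add: add_divide_distrib)
qed

lemma ES_cr: "ES cr"
proof -
  define P where "P = norm (Polygamma 1 (1::complex))"
  show ?thesis
  proof (rule ES_bound[of _ "2 * (2 + P + pi^2)"])
    fix k
    have h: "norm ((psi k)\<^sup>2 - Polygamma 1 (of_nat (k + 1)) / 2 + (of_real pi)\<^sup>2 / 4)
          \<le> (2 + P + pi^2) * (real k + 1)^2"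
    proof -
      have "norm ((psi k)\<^sup>2 - Polygamma 1 (of_nat (k + 1)) / 2 + (of_real pi)\<^sup>2 / 4)
         \<le> norm (psi k)^2 + norm (Polygamma 1 (of_nat (k + 1) :: complex)) / 2 + pi^2/4"
      proof -
        have "norm ((psi k)\<^sup>2 - Polygamma 1 (of_nat (k + 1)) / 2 + (of_real pi)\<^sup>2 / 4)
           \<le> norm ((psi k)\<^sup>2 - Polygamma 1 (of_nat (k + 1)) / 2) + norm ((of_real pi :: complex)\<^sup>2 / 4)"
          by (rule norm_triangle_ineq)
        also have "\<dots> \<le> norm ((psi k)\<^sup>2) + norm (Polygamma 1 (of_nat (k + 1) :: complex) / 2) + norm ((of_real pi :: complex)\<^sup>2 / 4)"
          by (intro add_right_mono norm_triangle_ineq4)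
        also have "\<dots> = norm (psi k)^2 + norm (Polygamma 1 (of_nat (k + 1) :: complex)) / 2 + pi^2/4"
          by (simp add: norm_power norm_divide)
        finally show ?thesis .
      qed
      also have "\<dots> \<le> (real k + 1)^2 + (P + real k) / 2 + pi^2/4"
        using psi_bound[of k] pg_bound[of k] unfolding P_def
        by (intro add_mono power_mono divide_right_mono) auto
      also have "\<dots> \<le> (2 + P + pi^2) * (real k + 1)^2"
      proof -
        have "1 \<le> (real k + 1)^2" by simp
        moreover have "real k \<le> (real k + 1)^2" by (simp add: power2_eq_square algebra_simps)
        moreover have "P \<ge> 0" by (simp add: P_def)
        ultimately have A: "P \<le> P * (real k + 1)^2" using mult_left_mono[of 1 "(real k + 1)^2" P] by simp
        have B: "pi^2 \<le> pi^2 * (real k + 1)^2" using mult_left_mono[of 1 "(real k + 1)^2" "pi^2"] \<open>1 \<le> (real k + 1)^2\<close> by simp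
        have "(real k + 1)^2 + (P + real k) / 2 + pi^2/4 \<le> (real k + 1)^2 + (P * (real k + 1)^2 + (real k + 1)^2) + pi^2 * (real k + 1)^2"
          using A B \<open>real k \<le> (real k + 1)^2\<close> \<open>P \<ge> 0\<close> zero_le_power2[of pi] zero_le_power2[of "real k + 1"] by (rule lin_aux)
        thus ?thesis by (simp add: algebra_simps)
      qed
      finally show ?thesis .
    qed
    have "norm (cr k) \<le> norm (ca k) * ((2 + P + pi^2) * (real k + 1)^2)"
      unfolding cr_def norm_mult by (intro mult_left_mono h) auto
    also have "\<dots> = (2 + P + pi^2) * (norm (ca k) * (real k + 1)^2)" by simp
    also have "\<dots> \<le> (2 + P + pi^2) * (2 / fact k)"
      by (intro mult_left_mono ca_bound) (auto simp: P_def intro: add_nonneg_nonneg)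
    finally show "norm (cr k) \<le> 2 * (2 + P + pi^2) / fact k" by (metis times_divide_eq_right mult.commute)
  qed
qed




lemma nz1: "(of_nat k + 1 :: complex) \<noteq> 0" "(1 + of_nat k :: complex) \<noteq> 0"
  by (metis of_nat_Suc of_nat_eq_0_iff add.commute nat.distinct(1))+

lemma ca_Suc: "ca k = - (4 * (of_nat k + 1)^2) * ca (Suc k)"
proof -
  have f: "(fact k :: complex) \<noteq> 0" by simp
  have "ca (Suc k) = - ((-1) ^ k / (4 * 4 ^ k * ((of_nat k + 1) * fact k)^2))"
    unfolding ca_def by (simp add: fact_Suc algebra_simps)
  also have "\<dots> = - ca k / (4 * (of_nat k + 1)^2)"
    unfolding ca_def by (simp add: power_mult_distrib)
  finally show ?thesis using nz1 by (simp add: field_simps)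
qed

lemma psi_Suc: "psi (Suc k) = psi k + 1 / (of_nat k + 1)"
proof -
  have "psi (Suc k) = Digamma (of_nat (k + 1) + 1)" unfolding psi_def by simp
  also have "\<dots> = psi k + 1 / of_nat (k + 1)"
    unfolding psi_def by (rule Digamma_plus1) (use nz1 in simp)
  finally show ?thesis by simp
qed

lemma coef_a: "nb (nb ca) k + shb ca k = 0"
proof (cases k)
  case (Suc j)
  show ?thesis unfolding Suc nb_def shb_def
    by (simp add: ca_Suc[of j] algebra_simps power2_eq_square)
qed (simp add: nb_def shb_def)

lemma coef_q: "shb cq k = 2 * nb ca k - nb (nb cq) k"
proof (cases k)
  case (Suc j)
  have "cq j = ca j * psi j" by (simp add: cq_def)
  also have "\<dots> = - (4 * (of_nat j + 1)^2) * ca (Suc j) * (psi (Suc j) - 1 / (of_nat j + 1))"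
    by (subst ca_Suc) (simp add: psi_Suc)
  finally have e: "cq j = - (4 * (of_nat j + 1)^2) * ca (Suc j) * (psi (Suc j) - 1 / (of_nat j + 1))" .
  have nz: "(of_nat j + 1 :: complex) \<noteq> 0" by (rule nz1)
  have sq: "(of_nat j + 1 :: complex)^2 * (1 / (of_nat j + 1)) = of_nat j + 1"
    using nz by (simp add: power2_eq_square)
  have "cq j = - (4 * (of_nat j + 1)^2) * ca (Suc j) * psi (Suc j) + 4 * ((of_nat j + 1 :: complex)^2 * (1 / (of_nat j + 1))) * ca (Suc j)"
    unfolding e by (simp add: algebra_simps)
  also have "\<dots> = - (4 * (of_nat j + 1)^2) * ca (Suc j) * psi (Suc j) + 4 * (of_nat j + 1) * ca (Suc j)"
    unfolding sq ..
  finally show ?thesis unfolding Suc nb_def shb_def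
    by (simp add: cq_def algebra_simps power2_eq_square)
qed (simp add: nb_def shb_def)

lemma Ew_zero: "Ew (\<lambda>k. 0) w = 0" by (simp add: Ew_def)

lemma ES_ca2: "ES (nb ca)" "ES (nb (nb ca))" "ES (nb cq)" "ES (nb (nb cq))"
  by (rule ES_nb[OF ES_ca], rule ES_nb[OF ES_nb[OF ES_ca]], rule ES_nb[OF ES_cq], rule ES_nb[OF ES_nb[OF ES_cq]])

lemma ode_a: "Ew (nb (nb ca)) w = - exp (2 * w) * Ew ca w"
proof -
  have "exp (2 * w) * Ew ca w = Ew (shb ca) w" by (rule Ew_shb(1)[OF ES_ca])
  also have "shb ca = (\<lambda>k. (-1) * nb (nb ca) k)" using coef_a by (auto simp: fun_eq_iff add_eq_0_iff2) 
  also have "Ew (\<lambda>k. (-1) * nb (nb ca) k) w = - Ew (nb (nb ca)) w"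
    by (subst Ew_cmult[OF ES_ca2(2)]) simp
  finally show ?thesis by simp
qed

lemma ode_q: "exp (2 * w) * Ew cq w = 2 * Ew (nb ca) w - Ew (nb (nb cq)) w"
proof -
  have "exp (2 * w) * Ew cq w = Ew (shb cq) w" by (rule Ew_shb(1)[OF ES_cq])
  also have "shb cq = (\<lambda>k. 2 * nb ca k - nb (nb cq) k)" using coef_q by auto
  also have "Ew (\<lambda>k. 2 * nb ca k - nb (nb cq) k) w = 2 * Ew (nb ca) w - Ew (nb (nb cq)) w"
    using ES_ca2 by (simp add: Ew_diff ES_cmult Ew_cmult)
  finally show ?thesis .
qed

definition lt :: complex where "lt = of_real (ln 2)"

definition jf where "jf w = Ew ca w"
definition j1 where "j1 w = Ew (nb ca) w"
definition yf where "yf w = (w - lt) * Ew ca w - Ew cq w"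
definition y1 where "y1 w = Ew ca w + (w - lt) * Ew (nb ca) w - Ew (nb cq) w"
definition y2 where "y2 w = 2 * Ew (nb ca) w + (w - lt) * Ew (nb (nb ca)) w - Ew (nb (nb cq)) w"

lemma jf_deriv: "(jf has_field_derivative j1 w) (at w)"
  unfolding jf_def[abs_def] j1_def using Ew_deriv[OF ES_ca] .
lemma j1_deriv: "(j1 has_field_derivative (- exp (2 * w) * jf w)) (at w)"
  unfolding j1_def[abs_def] jf_def using Ew_deriv[OF ES_ca2(1), of w] ode_a by simp
lemma yf_deriv: "(yf has_field_derivative y1 w) (at w)"
  unfolding yf_def[abs_def] y1_def
  by (auto intro!: derivative_eq_intros Ew_deriv ES_ca ES_cq simp: algebra_simps)
lemma y1_deriv: "(y1 has_field_derivative (- exp (2 * w) * yf w)) (at w)"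
proof -
  have "(y1 has_field_derivative y2 w) (at w)"
    unfolding y2_def y1_def[abs_def]
    by (auto intro!: derivative_eq_intros Ew_deriv ES_ca ES_cq ES_ca2 simp: algebra_simps)
  moreover have "y2 w = - exp (2 * w) * yf w"
    unfolding y2_def yf_def using ode_a[of w] ode_q[of w] by (simp add: algebra_simps)
  ultimately show ?thesis by simp
qed

definition G0 where
  "G0 w = 1/2 * ((w - lt)^2 * Ew ca w - 2 * (w - lt) * Ew cq w + Ew cr w)"

lemma G0_holo: "G0 holomorphic_on UNIV"
  unfolding G0_def[abs_def]
  using Ew_holo[OF ES_ca] Ew_holo[OF ES_cq] Ew_holo[OF ES_cr]
  by (intro holomorphic_intros) auto

lemma G0_shift:
  assumes "exp (2 * c) = 1"
  shows "G0 (w - c) = G0 w + (- c * yf w + c^2 / 2 * jf w)"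
  unfolding G0_def yf_def jf_def Ew_periodic[OF assms]
  by (simp add: algebra_simps power2_eq_square)

lemma Lhalf: "\<bar>Im w\<bar> < pi \<Longrightarrow> Ln (exp w / 2) = w - lt"
proof -
  assume assms: "\<bar>Im w\<bar> < pi"
  have "Ln (exp w / of_real 2) = Ln (exp w) - of_real (ln 2)"
    by (rule Ln_divide_of_real) auto
  moreover have "Ln (exp w) = w" using assms by (intro Ln_exp) auto
  ultimately show ?thesis by (simp add: lt_def)
qed

lemma e2: "(exp w / 2)^2 = exp (2 * w) / (4::complex)"
proof -
  have "exp (2 * w) = exp w ^ 2" using exp_of_nat_mult[of 2 w] by simp
  thus ?thesis by (simp add: power_divide)
qed

lemma pow_half: "(exp w / 2) ^ (2 * k) = exp (2 * w) ^ k / (4 ^ k :: complex)"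
proof -
  have "(exp w / 2) ^ (2 * k) = ((exp w / 2)^2) ^ k" by (simp add: power_mult)
  also have "\<dots> = exp (2 * w) ^ k / 4 ^ k" unfolding e2 by (simp add: power_divide)
  finally show ?thesis .
qed

lemma tm_lemma:
  fixes T :: complex
  assumes "Ln (exp w / 2) = w - lt" and "T = exp (2 * w)"
  shows "(-1) ^ k * (exp w / 2) ^ (2 * k) / (fact k)\<^sup>2 *
       ((Ln (exp w / 2) - Digamma (of_nat (k + 1)))\<^sup>2 - Polygamma 1 (of_nat (k + 1)) / 2
        + (of_real pi)\<^sup>2 / 4)
     = (w - lt)^2 * (ca k * T ^ k) - 2 * (w - lt) * (cq k * T ^ k) + cr k * T ^ k"
proof -
  have X: "(-1) ^ k * (exp w / 2) ^ (2 * k) / (fact k)\<^sup>2 = ca k * T ^ k"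
    unfolding pow_half assms(2) by (simp add: ca_def)
  have "(-1) ^ k * (exp w / 2) ^ (2 * k) / (fact k)\<^sup>2 *
       ((Ln (exp w / 2) - Digamma (of_nat (k + 1)))\<^sup>2 - Polygamma 1 (of_nat (k + 1)) / 2
        + (of_real pi)\<^sup>2 / 4) = ca k * T ^ k * (((w - lt) - psi k)\<^sup>2 - Polygamma 1 (of_nat (k + 1)) / 2
        + (of_real pi)\<^sup>2 / 4)" unfolding assms(1) psi_def X by simp
  also have "\<dots> = (w - lt)^2 * (ca k * T ^ k) - 2 * (w - lt) * (cq k * T ^ k) + cr k * T ^ k"
    unfolding cq_def cr_def by (simp add: power2_eq_square algebra_simps)
  finally show ?thesis .
qed

lemma S10_G0:
  assumes "\<bar>Im w\<bar> < pi"
  shows "S10 (exp w) = G0 w"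
proof -
  define T where "T = exp (2 * w)"
  note tm = tm_lemma[OF Lhalf[OF assms] T_def]
  have a: "(\<lambda>k. ca k * T ^ k) sums Ew ca w" unfolding Ew_def T_def by (rule ES_sums[OF ES_ca])
  have b: "(\<lambda>k. cq k * T ^ k) sums Ew cq w" unfolding Ew_def T_def by (rule ES_sums[OF ES_cq])
  have c: "(\<lambda>k. cr k * T ^ k) sums Ew cr w" unfolding Ew_def T_def by (rule ES_sums[OF ES_cr])
  have s: "(\<lambda>k. (w - lt)^2 * (ca k * T ^ k) - 2 * (w - lt) * (cq k * T ^ k) + cr k * T ^ k)
           sums ((w - lt)^2 * Ew ca w - 2 * (w - lt) * Ew cq w + Ew cr w)"
    by (rule sums_add[OF sums_diff[OF sums_mult[OF a] sums_mult[OF b]] c])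
  show ?thesis unfolding S10_def G0_def tm sums_unique[OF s] ..
qed




lemma pow_half_gen: "(z / 2) ^ (2 * k) = (z^2) ^ k / (4 ^ k :: complex)"
proof -
  have "(z / 2) ^ (2 * k) = ((z / 2)^2) ^ k" by (simp add: power_mult)
  also have "(z / 2)^2 = z^2 / 4" by (simp add: power_divide)
  finally show ?thesis by (simp add: power_divide)
qed

lemma L1: "(-1) ^ k * (z / 2) ^ (2 * k + 0) / (fact k * fact (k + 0)) = ca k * (z^2) ^ k"
  unfolding ca_def by (simp add: pow_half_gen power2_eq_square)

lemma L2: "(-1) ^ k * (z / 2) ^ (2 * k + 1) / (fact k * fact (k + 1)) = ca k * z * (z^2) ^ k / (2 * (of_nat k + 1))"
proof -
  have "(z / 2) ^ (2 * k + 1) = (z / 2) ^ (2 * k) * (z / 2)" by simp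
  also have "\<dots> = (z^2) ^ k / 4 ^ k * (z / 2)" unfolding pow_half_gen ..
  finally have "(z / 2) ^ (2 * k + 1) = (z^2) ^ k / 4 ^ k * (z / 2)" .
  moreover have "(fact (k + 1) :: complex) = (of_nat k + 1) * fact k" by (simp add: fact_Suc)
  moreover have g: "\<And>s X P F a z :: complex. P \<noteq> 0 \<Longrightarrow> F \<noteq> 0 \<Longrightarrow> a \<noteq> 0 \<Longrightarrow>
      s * (X / P * (z / 2)) / (F * (a * F)) = s / (P * F^2) * z * X / (2 * a)"
    by (simp add: field_simps power2_eq_square)
  ultimately show ?thesis unfolding ca_def using nz1[of k] by (simp only:) (rule g, auto)
qed

lemma L3: "(- (z^2) / 4) ^ k = (-1) ^ k * (z^2) ^ k / (4 ^ k :: complex)"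
proof -
  have "- (z^2) / 4 = (-1) * (z^2 / 4)" by simp
  hence "(- (z^2) / 4) ^ k = (-1) ^ k * (z^2 / 4) ^ k" by (simp only: power_mult_distrib)
  also have "\<dots> = (-1) ^ k * ((z^2) ^ k / 4 ^ k)" by (simp only: power_divide)
  finally show ?thesis by simp
qed

lemma Ln_half: "z \<noteq> 0 \<Longrightarrow> Ln (z / 2) = Ln z - lt"
  using Ln_divide_of_real[of 2 z] by (simp add: lt_def)

lemma exp2Ln: "z \<noteq> 0 \<Longrightarrow> exp (2 * Ln z) = z^2"
  using exp_of_nat_mult[of 2 "Ln z"] by simp

lemma B1: assumes "z \<noteq> 0" shows "jf (Ln z) = besselJ 0 z"
  unfolding jf_def Ew_def besselJ_def exp2Ln[OF assms] L1 ..

lemma B2: assumes "z \<noteq> 0" shows "yf (Ln z) = of_real pi / 2 * besselY 0 z"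
proof -
  have t: "(Digamma (of_nat (k + 1)) + Digamma (of_nat (0 + k + 1))) * (- z\<^sup>2 / 4) ^ k / (fact k * fact (0 + k))
           = 2 * (cq k * (z^2) ^ k)" for k
    unfolding L3 cq_def ca_def psi_def by (simp add: power2_eq_square)
  have s: "(\<lambda>k. 2 * (cq k * (z^2) ^ k)) sums (2 * Ew cq (Ln z))"
    unfolding Ew_def exp2Ln[OF assms] by (intro sums_mult ES_sums ES_cq)
  have Y: "besselY 0 z = 2 / of_real pi * Ln (z / 2) * besselJ 0 z - 1 / of_real pi * (2 * Ew cq (Ln z))"
    unfolding besselY_def t sums_unique[OF s, symmetric] by simp
  have pnz: "(of_real pi :: complex) \<noteq> 0" by simp
  have "of_real pi * besselY 0 z = of_real pi * (2 / of_real pi) * (Ln (z / 2) * besselJ 0 z)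
          - of_real pi * (1 / of_real pi) * (2 * Ew cq (Ln z))"
    unfolding Y by (simp add: algebra_simps)
  also have "\<dots> = 2 * (Ln (z / 2) * besselJ 0 z) - 2 * Ew cq (Ln z)" using pnz by simp
  finally have Y2: "of_real pi * besselY 0 z = 2 * (Ln (z / 2) * besselJ 0 z) - 2 * Ew cq (Ln z)" .
  have "of_real pi / 2 * besselY 0 z = (of_real pi * besselY 0 z) / 2" by simp
  also have "\<dots> = Ln (z / 2) * besselJ 0 z - Ew cq (Ln z)" unfolding Y2 by simp
  finally show ?thesis unfolding yf_def B1[OF assms, symmetric] Ln_half[OF assms] jf_def by simp
qed

lemma B3: assumes "z \<noteq> 0" shows "j1 (Ln z) = - z * besselJ 1 z"
proof -
  define f where "f k = nb ca k * (z^2) ^ k" for k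
  have "f sums j1 (Ln z)" unfolding f_def j1_def Ew_def exp2Ln[OF assms]
    by (intro ES_sums ES_ca2)
  hence "(\<lambda>k. f (Suc k)) sums j1 (Ln z)" by (subst sums_Suc_iff) (simp add: f_def nb_def)
  moreover have "f (Suc k) = - z * ((-1) ^ k * (z / 2) ^ (2 * k + 1) / (fact k * fact (k + 1)))" for k
  proof -
    have "f (Suc k) = 2 * (of_nat k + 1) * (- ca k / (4 * (of_nat k + 1)^2)) * (z^2 * (z^2)^k)"
      unfolding f_def nb_def using ca_Suc[of k] nz1[of k] by (simp add: field_simps)
    moreover have g: "\<And>a c X :: complex. a \<noteq> 0 \<Longrightarrow> 2 * a * (- c / (4 * a^2)) * (z^2 * X) = - z * (c * z * X / (2 * a))"
      by (simp add: field_simps power2_eq_square)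
    ultimately show ?thesis unfolding L2 using g[OF nz1(1)[of k]] by simp
  qed
  ultimately have "(\<lambda>k. - z * ((-1) ^ k * (z / 2) ^ (2 * k + 1) / (fact k * fact (k + 1)))) sums j1 (Ln z)"
    by simp
  hence "(\<lambda>k. - z * ((-1) ^ k * (z / 2) ^ (2 * k + 1) / (fact k * fact (k + 1))) / (- z)) sums (j1 (Ln z) / (- z))"
    by (rule sums_divide)
  hence "(\<lambda>k. (-1) ^ k * (z / 2) ^ (2 * k + 1) / (fact k * fact (k + 1))) sums (j1 (Ln z) / (- z))"
    using assms by simp
  hence "besselJ 1 z = j1 (Ln z) / (- z)" unfolding besselJ_def by (simp add: sums_iff)
  thus ?thesis using assms by (simp add: field_simps)
qed

lemma ca_Suc': "ca (Suc k) = - ca k / (4 * (of_nat k + 1)^2)"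
  using ca_Suc[of k] nz1[of k] by (simp add: field_simps)

lemma B4: assumes "z \<noteq> 0" shows "y1 (Ln z) = - z * (of_real pi / 2) * besselY 1 z"
proof -
  define g where "g k = (ca k - nb cq k) * (z^2) ^ k" for k
  define v where "v k = (Digamma (of_nat (k + 1)) + Digamma (of_nat (1 + k + 1))) * (- z\<^sup>2 / 4) ^ k / (fact k * fact (1 + k))" for k
  define Ea where "Ea = Ew ca (Ln z)"
  define Enq where "Enq = Ew (nb cq) (Ln z)"
  have "g sums (Ea - Enq)" unfolding g_def Ea_def Enq_def Ew_def exp2Ln[OF assms] left_diff_distrib
    by (intro sums_diff ES_sums ES_ca ES_ca2)
  hence "(\<lambda>k. g (Suc k)) sums (Ea - Enq - 1)"
    by (subst sums_Suc_iff) (simp add: g_def nb_def ca_def)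
  moreover have "g (Suc k) = z^2 / 4 * v k" for k
  proof -
    define a where "a = (of_nat k + 1 :: complex)"
    have a: "a \<noteq> 0" unfolding a_def by (rule nz1)
    have d1: "Digamma (of_nat (k + 1)) = psi k" by (simp add: psi_def)
    have d2: "Digamma (of_nat (1 + k + 1)) = psi (Suc k)" by (simp add: psi_def)
    have f1: "fact (1 + k) = a * (fact k :: complex)" by (simp add: a_def fact_Suc add.commute)
    have gg: "\<And>p q s X P F. P \<noteq> 0 \<Longrightarrow> F \<noteq> 0 \<Longrightarrow> (p + q) * (s * X / P) / (F * (a * F)) = (p + q) * (s / (P * F^2) * X / a)"
      using a by (simp add: field_simps power2_eq_square)
    have "v k = (psi k + psi (Suc k)) * (ca k * (z^2) ^ k / a)"
      unfolding v_def L3 d1 d2 f1 ca_def by (rule gg) auto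
    also have "\<dots> = (psi k + (psi k + 1 / a)) * (ca k * (z^2) ^ k / a)"
      unfolding psi_Suc a_def ..
    finally have vk: "v k = (psi k + (psi k + 1 / a)) * (ca k * (z^2) ^ k / a)" .
    have gk: "g (Suc k) = (- ca k / (4 * a^2) - 2 * a * (- ca k / (4 * a^2)) * (psi k + 1 / a)) * (z^2 * (z^2) ^ k)"
      unfolding g_def nb_def cq_def ca_Suc' psi_Suc a_def by (simp add: algebra_simps)
    have gen3: "\<And>c p X. (- c / (4 * a^2) - 2 * a * (- c / (4 * a^2)) * (p + 1 / a)) * (z^2 * X)
        = z^2 / 4 * ((p + (p + 1 / a)) * (c * X / a))"
      using a by (simp add: field_simps power2_eq_square)
    show ?thesis unfolding gk vk by (rule gen3)
  qed
  ultimately have "(\<lambda>k. z^2 / 4 * v k) sums (Ea - Enq - 1)" by simp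
  hence "(\<lambda>k. z^2 / 4 * v k / (z^2 / 4)) sums ((Ea - Enq - 1) / (z^2 / 4))" by (rule sums_divide)
  hence "v sums ((Ea - Enq - 1) / (z^2 / 4))" using assms by simp
  hence V: "(\<Sum>k. v k) = (Ea - Enq - 1) / (z^2 / 4)" by (simp add: sums_iff)
  have Y1: "besselY 1 z = - (2 / z) / of_real pi + 2 / of_real pi * Ln (z / 2) * besselJ 1 z
      - (z / 2) / of_real pi * (\<Sum>k. v k)"
    unfolding besselY_def v_def by (simp add: power_int_minus)
  have gen: "\<And>p L J V. p \<noteq> 0 \<Longrightarrow> - z * (p / 2) * (- (2 / z) / p + 2 / p * L * J - (z / 2) / p * V)
      = 1 - z * L * J + z^2 / 4 * V"
    using assms by (simp add: field_simps power2_eq_square)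
  have "- z * (of_real pi / 2) * besselY 1 z = 1 - z * Ln (z / 2) * besselJ 1 z + z^2 / 4 * (\<Sum>k. v k)"
    unfolding Y1 by (rule gen) simp
  also have "\<dots> = Ea - Enq + Ln (z / 2) * (- z * besselJ 1 z)"
    unfolding V using assms by (simp add: field_simps)
  also have "\<dots> = y1 (Ln z)"
    unfolding y1_def Ea_def Enq_def B3[OF assms, symmetric] Ln_half[OF assms] j1_def by (simp add: algebra_simps)
  finally show ?thesis ..
qed




definition Lop :: "(complex \<Rightarrow> complex) \<Rightarrow> complex \<Rightarrow> complex" where
  "Lop F = (\<lambda>w. deriv F w * exp (- 2 * w) / 2)"

lemma Lop_holo: "F holomorphic_on UNIV \<Longrightarrow> Lop F holomorphic_on UNIV"
  unfolding Lop_def by (intro holomorphic_intros) auto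

lemma Lpow_holo: "F holomorphic_on UNIV \<Longrightarrow> (Lop ^^ n) F holomorphic_on UNIV"
  by (induction n) (auto intro: Lop_holo)

lemma holo_diff_at: "F holomorphic_on UNIV \<Longrightarrow> F field_differentiable (at w)"
  by (rule holomorphic_on_imp_differentiable_at) auto

lemma Lop_add: "F holomorphic_on UNIV \<Longrightarrow> H holomorphic_on UNIV \<Longrightarrow>
   Lop (\<lambda>w. F w + H w) = (\<lambda>w. Lop F w + Lop H w)"
  unfolding Lop_def
  by (auto simp: fun_eq_iff deriv_add[OF holo_diff_at holo_diff_at] algebra_simps)

lemma Lpow_add: "F holomorphic_on UNIV \<Longrightarrow> H holomorphic_on UNIV \<Longrightarrow>
   (Lop ^^ n) (\<lambda>w. F w + H w) = (\<lambda>w. (Lop ^^ n) F w + (Lop ^^ n) H w)"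
proof (induction n)
  case (Suc n)
  show ?case using Suc by (simp add: Lop_add[OF Lpow_holo Lpow_holo])
qed simp

lemma Lop_shift:
  assumes "F holomorphic_on UNIV" "exp (2 * c) = 1"
  shows "Lop (\<lambda>w. F (w - c)) = (\<lambda>w. Lop F (w - c))"
proof
  fix w
  have d: "(F has_field_derivative deriv F (w - c)) (at (w - c))"
    using holo_diff_at[OF assms(1)] DERIV_deriv_iff_field_differentiable by blast
  have "((\<lambda>w. F (w - c)) has_field_derivative deriv F (w - c) * 1) (at w)"
    by (rule DERIV_chain2[where g="\<lambda>w. w - c" and x=w, OF d]) (auto intro!: derivative_eq_intros)
  hence "deriv (\<lambda>w. F (w - c)) w = deriv F (w - c)" by (simp add: DERIV_imp_deriv)
  moreover have "exp (- 2 * (w - c)) = exp (- 2 * w)"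
  proof -
    have "- 2 * (w - c) = - 2 * w + 2 * c" by (simp add: algebra_simps)
    thus ?thesis using assms(2) by (simp only: exp_add) simp
  qed
  ultimately show "Lop (\<lambda>w. F (w - c)) w = Lop F (w - c)" unfolding Lop_def by simp
qed

lemma Lpow_shift:
  assumes "F holomorphic_on UNIV" "exp (2 * c) = 1"
  shows "(Lop ^^ n) (\<lambda>w. F (w - c)) = (\<lambda>w. (Lop ^^ n) F (w - c))"
proof (induction n)
  case (Suc n)
  show ?case using Suc Lop_shift[OF Lpow_holo[OF assms(1)] assms(2), of n] by simp
qed simp

lemma exp_not_nonpos: "\<bar>Im w\<bar> < pi \<Longrightarrow> exp w \<notin> \<real>\<^sub>\<le>\<^sub>0"
proof
  assume a: "\<bar>Im w\<bar> < pi" and b: "exp w \<in> \<real>\<^sub>\<le>\<^sub>0"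
  have "Ln (exp w) = w" using a by (intro Ln_exp) auto
  moreover have "Im (Ln (exp w)) = pi"
    using b by (subst Im_Ln_eq_pi) (auto simp: complex_nonpos_Reals_iff, 
      metis exp_not_eq_zero complex_eq_iff zero_complex.simps less_eq_real_def)
  ultimately show False using a by simp
qed

lemma dsq_lift:
  assumes holo: "F holomorphic_on UNIV" and lift: "\<And>w. \<bar>Im w\<bar> < pi \<Longrightarrow> f (exp w) = F w"
    and w: "\<bar>Im w\<bar> < pi"
  shows "dsq f (exp w) = Lop F w"
proof -
  define S where "S = - (\<real>\<^sub>\<le>\<^sub>0 :: complex set)"
  have S: "open S" unfolding S_def by (simp add: open_Compl)
  have ew: "exp w \<in> S" unfolding S_def using exp_not_nonpos[OF w] by simp
  have eq: "F (Ln u) = f u" if "u \<in> S" for u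
  proof -
    have u: "u \<notin> \<real>\<^sub>\<le>\<^sub>0" using that by (simp add: S_def)
    hence "u \<noteq> 0" by auto
    have "\<bar>Im (Ln u)\<bar> < pi" using mpi_less_Im_Ln[of u] Im_Ln_less_pi[OF u] \<open>u \<noteq> 0\<close> by auto
    hence "f (exp (Ln u)) = F (Ln u)" by (rule lift)
    thus ?thesis using \<open>u \<noteq> 0\<close> by simp
  qed
  have Lnw: "Ln (exp w) = w" using w by (intro Ln_exp) auto
  have dF: "(F has_field_derivative deriv F w) (at w)"
    using holo_diff_at[OF holo] DERIV_deriv_iff_field_differentiable by blast
  have "((\<lambda>u. F (Ln u)) has_field_derivative deriv F w * inverse (exp w)) (at (exp w))"
  proof -
    have dF': "(F has_field_derivative deriv F w) (at (Ln (exp w)))" unfolding Lnw by (rule dF)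
    show ?thesis using DERIV_chain2[OF dF' has_field_derivative_Ln[OF exp_not_nonpos[OF w]]] .
  qed
  hence "(f has_field_derivative deriv F w * inverse (exp w)) (at (exp w))"
    by (rule has_field_derivative_transform_within_open[OF _ S ew eq])
  hence d1: "deriv f (exp w) = deriv F w * inverse (exp w)" by (rule DERIV_imp_deriv)
  have e1: "exp (- 2 * w) = inverse (exp w) * inverse (exp w)"
    by (simp add: exp_minus[symmetric] exp_add[symmetric])
  have "dsq f (exp w) = (deriv F w * inverse (exp w)) / (2 * exp w)" unfolding dsq_def d1 ..
  also have "\<dots> = deriv F w * (inverse (exp w) * inverse (exp w)) / 2"
  proof -
    have gen: "\<And>D X :: complex. (D * inverse X) / (2 * X) = D * (inverse X * inverse X) / 2"
      subgoal for D X by (cases "X = 0") (simp_all add: field_simps)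
      done
    show ?thesis by (rule gen)
  qed
  also have "\<dots> = Lop F w" unfolding Lop_def e1 ..
  finally show ?thesis .
qed

lemma dsqpow_lift:
  assumes holo: "F holomorphic_on UNIV" and lift: "\<And>w. \<bar>Im w\<bar> < pi \<Longrightarrow> f (exp w) = F w"
  shows "\<bar>Im w\<bar> < pi \<Longrightarrow> (dsq ^^ n) f (exp w) = (Lop ^^ n) F w"
proof (induction n arbitrary: w)
  case (Suc n)
  show ?case using dsq_lift[OF Lpow_holo[OF holo], of "(dsq ^^ n) f" n w] Suc by simp
qed (use lift in simp)




lemma ABC_rec:
  "polyA (Suc (Suc n)) = - smult (of_nat (2 * (n + 1))) (polyA (Suc n)) + [:0, 1:] * pderiv (polyA (Suc n)) + polyC (Suc n)"
  "polyB (Suc (Suc n)) = - smult (of_nat (2 * (n + 1))) (polyB (Suc n)) + [:0, 1:] * pderiv (polyB (Suc n)) - [:0, 0, 1:] * polyC (Suc n)"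
  "polyC (Suc (Suc n)) = - smult (of_nat (2 * (n + 1))) (polyC (Suc n)) + polyB (Suc n) + [:0, 1:] * pderiv (polyC (Suc n))"
proof -
  obtain a b c where e: "ABC (Suc n) = (a, b, c)" by (metis prod_cases3)
  show "polyA (Suc (Suc n)) = - smult (of_nat (2 * (n + 1))) (polyA (Suc n)) + [:0, 1:] * pderiv (polyA (Suc n)) + polyC (Suc n)"
    by (simp add: polyA_def polyC_def e Let_def)
  show "polyB (Suc (Suc n)) = - smult (of_nat (2 * (n + 1))) (polyB (Suc n)) + [:0, 1:] * pderiv (polyB (Suc n)) - [:0, 0, 1:] * polyC (Suc n)"
    by (simp add: polyB_def polyC_def e Let_def)
  show "polyC (Suc (Suc n)) = - smult (of_nat (2 * (n + 1))) (polyC (Suc n)) + polyB (Suc n) + [:0, 1:] * pderiv (polyC (Suc n))"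
    by (simp add: polyB_def polyC_def e Let_def)
qed

lemma ABC_1: "polyA (Suc 0) = 0" "polyB (Suc 0) = 0" "polyC (Suc 0) = 1"
  by (simp_all add: polyA_def polyB_def polyC_def)

lemma ABC_even: "odd i \<Longrightarrow> coeff (polyA n) i = 0 \<and> coeff (polyB n) i = 0 \<and> coeff (polyC n) i = 0"
proof (induction n arbitrary: i rule: ABC.induct)
  case 1 thus ?case by (simp add: polyA_def polyB_def polyC_def)
next
  case 2 thus ?case by (cases i) (simp_all add: polyA_def polyB_def polyC_def coeff_1)
next
  case (3 k)
  from \<open>odd i\<close> obtain j where i: "i = Suc j" and j: "even j" by (metis oddE Suc_eq_plus1 even_mult_iff even_numeral)
  have IH: "odd l \<Longrightarrow> coeff (polyA (Suc k)) l = 0 \<and> coeff (polyB (Suc k)) l = 0 \<and> coeff (polyC (Suc k)) l = 0" for l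
    by (rule "3.IH")
  have cS: "coeff (polyA (Suc k)) (Suc j) = 0" "coeff (polyB (Suc k)) (Suc j) = 0" "coeff (polyC (Suc k)) (Suc j) = 0"
    using IH[of "Suc j"] j by auto
  have cC: "coeff (pCons 0 (polyC (Suc k))) j = 0"
  proof (cases j)
    case (Suc l)
    thus ?thesis using IH[of l] j by auto
  qed simp
  show ?case unfolding i ABC_rec using cS cC by (simp add: coeff_pderiv)
qed

lemma odd_part_zero: "(\<And>i. odd i \<Longrightarrow> coeff P i = 0) \<Longrightarrow> odd_part P = 0"
  unfolding odd_part_def by (intro sum.neutral) auto

lemma odd_parts: "odd_part (polyA n) = 0" "odd_part (polyB n) = 0" "odd_part (polyC n) = 0"
  using ABC_even by (auto intro!: odd_part_zero)

lemma bar_parts: "bar_part m (polyB n) = polyB n" "bar_part m (polyC n) = polyC n"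
  unfolding bar_part_def odd_parts by simp_all

lemma pe_deriv: "((\<lambda>w. poly p (exp w)) has_field_derivative poly (pderiv p) (exp w) * exp w) (at w)"
  by (rule DERIV_chain2[OF poly_DERIV DERIV_exp])

lemma rec_lemma:
  assumes d0: "\<And>w. (D has_field_derivative D1 w) (at w)"
      and d1: "\<And>w. (D1 has_field_derivative (- exp (2 * w) * D w)) (at w)"
  shows "(Lop ^^ Suc n) D = (\<lambda>w. (poly (polyB (Suc n)) (exp w) * D w + poly (polyC (Suc n)) (exp w) * D1 w)
            * exp (- (2 * of_nat (Suc n)) * w) / 2 ^ Suc n)"
proof (induction n)
  case 0
  show ?case unfolding Lop_def using d0 by (auto simp: fun_eq_iff ABC_1 DERIV_imp_deriv)
next
  case (Suc n)
  define PB where "PB = polyB (Suc n)"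
  define PC where "PC = polyC (Suc n)"
  define k :: complex where "k = 2 * of_nat (Suc n)"
  define Phi where "Phi = (\<lambda>w. (poly PB (exp w) * D w + poly PC (exp w) * D1 w) * exp (- k * w) / 2 ^ Suc n)"
  have IH: "(Lop ^^ Suc n) D = Phi" unfolding Suc Phi_def PB_def PC_def k_def ..
  show ?case
  proof
    fix w
    have dexp: "((\<lambda>w. exp (- k * w)) has_field_derivative exp (- k * w) * (- k)) (at w)"
      by (auto intro!: derivative_eq_intros)
    note f = DERIV_cdivide[OF DERIV_mult[OF DERIV_add[OF DERIV_mult[OF pe_deriv d0] DERIV_mult[OF pe_deriv d1]] dexp], where c="2 ^ Suc n"]
    note dP = DERIV_imp_deriv[OF f]

    have e1: "exp (- (2 * of_nat (Suc (Suc n))) * w) = exp (- k * w) * exp (- 2 * w)"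
    proof -
      have "- (2 * of_nat (Suc (Suc n))) * w = - k * w + - 2 * w" by (simp add: k_def algebra_simps)
      thus ?thesis by (simp only: exp_add)
    qed
    have e2: "exp (2 * w) = exp w * exp w"
      using exp_of_nat_mult[of 2 w] by (simp add: power2_eq_square)
    have LS: "(Lop ^^ Suc (Suc n)) D w = Lop Phi w"
      using IH by (metis comp_apply funpow.simps(2))
    have k2: "(of_nat (2 * (Suc n + 1)) :: complex) = k + 2" unfolding k_def by simp
    show "(Lop ^^ Suc (Suc n)) D w = (poly (polyB (Suc (Suc n))) (exp w) * D w + poly (polyC (Suc (Suc n))) (exp w) * D1 w)
            * exp (- (2 * of_nat (Suc (Suc n))) * w) / 2 ^ Suc (Suc n)"
      unfolding LS
      unfolding Lop_def Phi_def dP e1 e2 ABC_rec(2,3)[of n, folded PB_def PC_def] k2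
      unfolding k_def by (simp add: algebra_simps)
  qed
qed




definition sg :: "int \<Rightarrow> complex" where "sg k = (if even k then 1 else -1)"

lemma m1_powi: "(-1::complex) powi k = sg k"
proof (cases "k \<ge> 0")
  case True
  then obtain j where k: "k = int j" using nonneg_int_cases by blast
  show ?thesis unfolding k sg_def by (simp add: minus_one_power_iff)
next
  case False
  then obtain j where k: "k = - int j" using nonpos_int_cases by (metis linear)
  show ?thesis unfolding k sg_def by (simp add: power_int_minus minus_one_power_iff)
qed

lemma sg_add: "sg (a + b) = sg a * sg b" unfolding sg_def by auto
lemma sg_minus: "sg (- a) = sg a" unfolding sg_def by auto
lemma sg_nat: "sg (int n) = (-1) ^ n" unfolding sg_def by (simp add: minus_one_power_iff)
lemma sg_sq: "sg a * sg a = 1" unfolding sg_def by auto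

lemma exp_shift_int:
  assumes "z \<noteq> 0"
  shows "exp (of_int k * (Ln z - of_int m * of_real pi * \<i>)) = z powi k * sg (k * m)"
proof -
  have "exp (of_int k * (Ln z - of_int m * of_real pi * \<i>))
        = exp (of_int k * Ln z) * exp (of_int (- (k * m)) * (of_real pi * \<i>))"
    by (simp add: exp_add[symmetric] algebra_simps)
  also have "exp (of_int k * Ln z) = exp (Ln z) powi k" by (rule exp_power_int[symmetric])
  also have "exp (of_int (- (k * m)) * (of_real pi * \<i>)) = exp (of_real pi * \<i>) powi (- (k * m))"
    by (rule exp_power_int[symmetric])
  finally show ?thesis using assms by (simp add: m1_powi sg_minus)
qed

lemma c2_one: "exp (2 * (of_int m * of_real pi * \<i>)) = 1"
proof -
  have "exp (2 * (of_int m * of_real pi * \<i>)) = exp (of_int m * (2 * of_real pi * \<i>))"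
    by (simp add: algebra_simps)
  also have "\<dots> = exp (2 * of_real pi * \<i>) powi m" by (rule exp_power_int[symmetric])
  finally show ?thesis by simp
qed

definition Dl :: "complex \<Rightarrow> complex \<Rightarrow> complex" where "Dl c w = - c * yf w + c^2 / 2 * jf w"
definition Dl1 :: "complex \<Rightarrow> complex \<Rightarrow> complex" where "Dl1 c w = - c * y1 w + c^2 / 2 * j1 w"

lemma Dl_deriv: "(Dl c has_field_derivative Dl1 c w) (at w)"
  unfolding Dl_def[abs_def] Dl1_def
  by (auto intro!: derivative_eq_intros yf_deriv jf_deriv)

lemma Dl1_deriv: "(Dl1 c has_field_derivative (- exp (2 * w) * Dl c w)) (at w)"
  unfolding Dl1_def[abs_def] Dl_def
  by (auto intro!: derivative_eq_intros y1_deriv j1_deriv simp: algebra_simps)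

lemma Dl_holo: "Dl c holomorphic_on UNIV"
  using Dl_deriv by (auto simp: holomorphic_on_def field_differentiable_def)

lemma Snp_K: "Snp n p z = (\<Sum>j<p. (-1) ^ j * z powi (- int n - 2 * int p + 2 * int j)
        / (2 ^ (2 * j + 2) * pochhammer (- of_nat p) (j + 1) * pochhammer (- of_nat (n + p)) (j + 1)))
     + (-1) ^ p / (2 ^ (2 * p) * fact p * pochhammer (1 + of_nat n) p) * Sn n z"
  unfolding Snp_def by simp

lemma Lpow_Dl:
  assumes "n > 0"
  shows "(Lop ^^ n) (Dl c) w = (poly (polyB n) (exp w) * Dl c w + poly (polyC n) (exp w) * Dl1 c w)
            * exp (- (2 * of_nat n) * w) / 2 ^ n"
proof -
  obtain k where n: "n = Suc k" using assms by (cases n) auto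
  show ?thesis unfolding n rec_lemma[OF Dl_deriv Dl1_deriv] ..
qed

lemma hank0: "Kpp_plus m * hankel1 0 z + Kpp_minus m * hankel2 0 z
   = - (of_int m * of_real pi * \<i>) * (of_real pi / 2 * besselY 0 z) + (of_int m * of_real pi * \<i>)^2 / 2 * besselJ 0 z"
proof -
  have "(of_int m * of_real pi * \<i>)^2 = - ((of_int m * of_real pi)^2 :: complex)" by (simp add: power_mult_distrib)
  thus ?thesis unfolding Kpp_plus_def Kpp_minus_def hankel1_def hankel2_def
    by (simp add: field_simps power2_eq_square)
qed

lemma hank1: "Kpp_plus m * hankel1 1 z + Kpp_minus m * hankel2 1 z
   = - (of_int m * of_real pi * \<i>) * (of_real pi / 2 * besselY 1 z) + (of_int m * of_real pi * \<i>)^2 / 2 * besselJ 1 z"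
proof -
  have "(of_int m * of_real pi * \<i>)^2 = - ((of_int m * of_real pi)^2 :: complex)" by (simp add: power_mult_distrib)
  thus ?thesis unfolding Kpp_plus_def Kpp_minus_def hankel1_def hankel2_def
    by (simp add: field_simps power2_eq_square)
qed

theorem lemma3p10:
  fixes n p :: nat and m :: int and \<zeta> :: complex
  assumes "n > 0" and "\<zeta> \<noteq> 0" and "- pi < Arg \<zeta>" and "Arg \<zeta> < pi"
  shows "\<exists>G. G holomorphic_on UNIV
           \<and> (\<forall>w. \<bar>Im w\<bar> < pi \<longrightarrow> G w = Snp n p (exp w))
           \<and> G (Ln \<zeta> - of_int m * of_real pi * \<i>) =
               (-1) powi (m * int n) * Snp n p \<zeta>
             + (-1) powi ((m + 1) * int n + int p)
                 / (2 ^ (2 * p + n) * fact n * fact p * pochhammer (1 + of_nat n) p)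
                 * \<zeta> powi (- int n)
                 * ( - delta m * (poly (odd_part (polyA n)) \<zeta>
                                  + poly (odd_part (polyB n)) \<zeta> * S10 \<zeta>
                                  + \<zeta> * poly (odd_part (polyC n)) \<zeta> * deriv S10 \<zeta>)
                     + poly (bar_part m (polyB n)) \<zeta>
                         * (Kpp_plus m * hankel1 0 \<zeta> + Kpp_minus m * hankel2 0 \<zeta>)
                     - \<zeta> * poly (bar_part m (polyC n)) \<zeta>
                         * (Kpp_plus m * hankel1 1 \<zeta> + Kpp_minus m * hankel2 1 \<zeta>))"
proof -
  define c :: complex where "c = of_int m * of_real pi * \<i>"
  have c2: "exp (2 * c) = 1" unfolding c_def by (rule c2_one)
  define Kc :: complex where "Kc = (-1) ^ p / (2 ^ (2 * p) * fact p * pochhammer (1 + of_nat n) p)"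
  define ee where "ee j = - int n - 2 * int p + 2 * int j" for j
  define den :: "nat \<Rightarrow> complex" where "den j = 2 ^ (2 * j + 2) * pochhammer (- of_nat p) (j + 1) * pochhammer (- of_nat (n + p)) (j + 1)" for j
  define LG where "LG = (Lop ^^ n) G0"
  define G where "G w = (\<Sum>j<p. (-1) ^ j * exp (of_int (ee j) * w) / den j)
                         + Kc * ((-1) ^ n * exp (of_nat n * w) / fact n * LG w)" for w
  have LGh: "LG holomorphic_on UNIV" unfolding LG_def by (rule Lpow_holo[OF G0_holo])
  have holo: "G holomorphic_on UNIV"
    unfolding G_def[abs_def] using LGh by (intro holomorphic_intros) auto
  have snpK: "Snp n p z = (\<Sum>j<p. (-1) ^ j * z powi ee j / den j) + Kc * Sn n z" for z
    unfolding Snp_K ee_def den_def Kc_def ..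
  have strip: "G w = Snp n p (exp w)" if w: "\<bar>Im w\<bar> < pi" for w
  proof -
    have "(dsq ^^ n) S10 (exp w) = LG w"
      unfolding LG_def by (rule dsqpow_lift[OF G0_holo S10_G0 w])
    hence "Sn n (exp w) = (-1) ^ n * exp (of_nat n * w) / fact n * LG w"
      unfolding Sn_def by (simp add: exp_of_nat_mult)
    thus ?thesis unfolding snpK G_def by (simp add: exp_power_int)
  qed
  have Lnz: "\<bar>Im (Ln \<zeta>)\<bar> < pi" using assms(2-4) by (simp add: Arg_eq_Im_Ln[symmetric])
  have GLn: "G (Ln \<zeta>) = Snp n p \<zeta>" using strip[OF Lnz] assms(2) by simp
  have w0: "Ln \<zeta> - of_int m * of_real pi * \<i> = Ln \<zeta> - c" unfolding c_def ..
  have "LG (Ln \<zeta> - c) = (Lop ^^ n) (\<lambda>w. G0 (w - c)) (Ln \<zeta>)"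
    unfolding LG_def Lpow_shift[OF G0_holo c2] ..
  also have "(\<lambda>w. G0 (w - c)) = (\<lambda>w. G0 w + Dl c w)"
    unfolding Dl_def using G0_shift[OF c2] by auto
  also have "(Lop ^^ n) (\<lambda>w. G0 w + Dl c w) = (\<lambda>w. LG w + (Lop ^^ n) (Dl c) w)"
    unfolding LG_def by (rule Lpow_add[OF G0_holo Dl_holo])
  finally have LGs: "LG (Ln \<zeta> - c) = LG (Ln \<zeta>) + (Lop ^^ n) (Dl c) (Ln \<zeta>)" by simp
  define H0 where "H0 = Kpp_plus m * hankel1 0 \<zeta> + Kpp_minus m * hankel2 0 \<zeta>"
  define H1 where "H1 = Kpp_plus m * hankel1 1 \<zeta> + Kpp_minus m * hankel2 1 \<zeta>"
  have DlH: "Dl c (Ln \<zeta>) = H0"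
    unfolding H0_def hank0 Dl_def B1[OF assms(2)] B2[OF assms(2)] c_def ..
  have Dl1H: "Dl1 c (Ln \<zeta>) = - \<zeta> * H1"
    unfolding H1_def hank1 Dl1_def B3[OF assms(2)] B4[OF assms(2)] c_def by (simp add: algebra_simps)
  have e2n: "exp (- (2 * of_nat n) * Ln \<zeta>) = inverse (\<zeta> ^ n * \<zeta> ^ n)"
  proof -
    have "exp (- (2 * of_nat n) * Ln \<zeta>) = inverse (exp (of_nat n * Ln \<zeta>) * exp (of_nat n * Ln \<zeta>))"
      by (simp add: exp_minus[symmetric] exp_add[symmetric] algebra_simps)
    thus ?thesis using assms(2) by (simp add: exp_of_nat_mult)
  qed
  define PB where "PB = poly (polyB n) \<zeta>"
  define PC where "PC = poly (polyC n) \<zeta>"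
  have LD: "(Lop ^^ n) (Dl c) (Ln \<zeta>) = (PB * H0 - \<zeta> * PC * H1) * inverse (\<zeta> ^ n * \<zeta> ^ n) / 2 ^ n"
    unfolding Lpow_Dl[OF assms(1)] DlH Dl1H e2n PB_def PC_def using assms(2) by simp
  have sumsh: "(\<Sum>j<p. (-1) ^ j * exp (of_int (ee j) * (Ln \<zeta> - c)) / den j)
        = sg (m * int n) * (\<Sum>j<p. (-1) ^ j * \<zeta> powi ee j / den j)"
    unfolding sum_distrib_left
  proof (intro sum.cong refl)
    fix j assume "j \<in> {..<p}"
    have "sg (ee j * m) = sg (m * int n)"
    proof -
      have "ee j * m = m * int n + 2 * (m * (int j - int p - int n))" unfolding ee_def by (simp add: algebra_simps)
      thus ?thesis unfolding sg_def by simp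
    qed
    thus "(-1) ^ j * exp (of_int (ee j) * (Ln \<zeta> - c)) / den j = sg (m * int n) * ((-1) ^ j * \<zeta> powi ee j / den j)"
      unfolding c_def exp_shift_int[OF assms(2)] by simp
  qed
  have expn: "exp (of_nat n * (Ln \<zeta> - c)) = \<zeta> ^ n * sg (m * int n)"
    using exp_shift_int[OF assms(2), of "int n" m] unfolding c_def by (simp add: mult.commute)
  have SnLn: "Sn n \<zeta> = (-1) ^ n * \<zeta> ^ n / fact n * LG (Ln \<zeta>)"
  proof -
    have "(dsq ^^ n) S10 (exp (Ln \<zeta>)) = LG (Ln \<zeta>)"
      unfolding LG_def by (rule dsqpow_lift[OF G0_holo S10_G0 Lnz])
    thus ?thesis unfolding Sn_def using assms(2) by simp
  qed
  have Gw0: "G (Ln \<zeta> - c) = sg (m * int n) * Snp n p \<zeta>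
      + sg (m * int n) * Kc * (-1) ^ n * \<zeta> ^ n / fact n * ((Lop ^^ n) (Dl c) (Ln \<zeta>))"
    unfolding G_def sumsh expn LGs snpK SnLn by (simp add: algebra_simps add_divide_distrib)
  have sgt: "(-1::complex) powi ((m + 1) * int n + int p) = sg (m * int n) * (-1) ^ n * (-1) ^ p"
    unfolding m1_powi by (simp add: algebra_simps sg_add sg_nat)
  have zn: "\<zeta> powi (- int n) = inverse (\<zeta> ^ n)" by (simp add: power_int_minus)
  have fin: "sg (m * int n) * Kc * (-1) ^ n * \<zeta> ^ n / fact n * ((PB * H0 - \<zeta> * PC * H1) * inverse (\<zeta> ^ n * \<zeta> ^ n) / 2 ^ n)
     = sg (m * int n) * (-1) ^ n * (-1) ^ p / (2 ^ (2 * p + n) * fact n * fact p * pochhammer (1 + of_nat n) p)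
         * inverse (\<zeta> ^ n) * (PB * H0 - \<zeta> * PC * H1)"
  proof -
    have "pochhammer (1 + of_nat n :: complex) p = of_nat (pochhammer (1 + n) p)"
      using pochhammer_of_nat[of "1 + n" p, where 'a=complex] by simp
    moreover have "pochhammer (1 + n) p > 0" by (rule pochhammer_pos) simp
    ultimately have pz: "pochhammer (1 + of_nat n :: complex) p \<noteq> 0" by simp
    have zz: "\<zeta> ^ n \<noteq> 0" using assms(2) by simp
    have gen: "\<And>s K a b X Z F P Q. Z \<noteq> 0 \<Longrightarrow> P \<noteq> 0 \<Longrightarrow> F \<noteq> 0 \<Longrightarrow> Q \<noteq> 0 \<Longrightarrow> K \<noteq> 0 \<Longrightarrow> b \<noteq> 0 \<Longrightarrow>
        s * ((-1) ^ p / (Q * P * K)) * a * Z / F * (X * inverse (Z * Z) / b)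
        = s * a * (-1) ^ p / (Q * b * F * P * K) * inverse Z * (X::complex)"
      by (simp add: field_simps)
    show ?thesis unfolding Kc_def power_add
      by (rule gen[OF zz]) (use pz in auto)
  qed
  show ?thesis
  proof (intro exI conjI allI impI)
    show "G holomorphic_on UNIV" by (rule holo)
    show "G w = Snp n p (exp w)" if "\<bar>Im w\<bar> < pi" for w using strip[OF that] .
    show "G (Ln \<zeta> - of_int m * of_real pi * \<i>) = (-1) powi (m * int n) * Snp n p \<zeta>
             + (-1) powi ((m + 1) * int n + int p)
                 / (2 ^ (2 * p + n) * fact n * fact p * pochhammer (1 + of_nat n) p)
                 * \<zeta> powi (- int n)
                 * ( - delta m * (poly (odd_part (polyA n)) \<zeta>
                                  + poly (odd_part (polyB n)) \<zeta> * S10 \<zeta>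
                                  + \<zeta> * poly (odd_part (polyC n)) \<zeta> * deriv S10 \<zeta>)
                     + poly (bar_part m (polyB n)) \<zeta>
                         * (Kpp_plus m * hankel1 0 \<zeta> + Kpp_minus m * hankel2 0 \<zeta>)
                     - \<zeta> * poly (bar_part m (polyC n)) \<zeta>
                         * (Kpp_plus m * hankel1 1 \<zeta> + Kpp_minus m * hankel2 1 \<zeta>))"
      unfolding w0 Gw0 LD fin odd_parts bar_parts sgt zn m1_powi[of "m * int n"]
        H0_def[symmetric] H1_def[symmetric] PB_def[symmetric] PC_def[symmetric]
      by simp
  qed
qed


end
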